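(* Let $A$ be an $n\times n$ real matrix with spectrum $\{\lambda_1,\dots,\lambda_n\}$ (counting algebraic multiplicities). Suppose $\lambda_1$ is real with a real eigenvector $v$ having no zero components. Let $B=[b_{ij}]=S^{-1}AS$ with $S=\mathrm{diag}(v)$. (1) If $n$ is even, let $F=[b_{ij}-\beta_j]$, where $\beta_j$ is the $(n/2)$-th largest element among $b_{1j},\dots,b_{j-1,j},b_{j+1,j},\dots,b_{nj}$. Then $\lambda_i\in\Gamma(F)\cap\Gamma(F^T)$ for $i=2,\dots,n$. (2) If $n$ is odd with $n\ge 3$, let $\beta_j$ and $\gamma_j$ be, respectively, the negatives of the $\frac{n-1}{2}$-th and the $\frac{n+1}{2}$-th largest numbers among $b_{1j},\dots,b_{j-1,j},b_{j+1,j},\dots,b_{nj}$, and let $F=[b_{ij}+\beta_j]$, $G=[b_{ij}+\gamma_j]$. Then $\lambda_i\in\Gamma(F)\cap\Gamma(F^T)\cap\Gamma(G)\cap\Gamma(G^T)$ for $i=2,\dots,n$.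
   Context: For an $n\times n$ complex matrix $M=[m_{ij}]$, its Ostrowski–Brauer set is $$\Gamma(M)=\bigcup_{1\le i<j\le n}\Big\{y\in\mathbb{C}: |y-m_{ii}|\,|y-m_{jj}|\le \Big(\sum_{k\ne i}|m_{ik}|\Big)\Big(\sum_{k\ne j}|m_{jk}|\Big)\Big\}.$$ "The $t$-th largest element" of a list refers to the $t$-th entry of the list sorted in non-increasing order (with repetitions). *)

theory Defs
  imports "Jordan_Normal_Form.Char_Poly"
begin

definition row_dev :: "complex mat \<Rightarrow> nat \<Rightarrow> real" where
  "row_dev M i = (\<Sum>k\<in>{0..<dim_row M} - {i}. cmod (M $$ (i,k)))"

definition ob_set :: "complex mat \<Rightarrow> complex set" where
  "ob_set M = (\<Union>i\<in>{0..<dim_row M}. \<Union>j\<in>{i<..<dim_row M}.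
      {y. cmod (y - M $$ (i,i)) * cmod (y - M $$ (j,j)) \<le> row_dev M i * row_dev M j})"

abbreviation cmat :: "real mat \<Rightarrow> complex mat" where
  "cmat M \<equiv> map_mat complex_of_real M"

definition kth_largest :: "nat \<Rightarrow> real list \<Rightarrow> real" where
  "kth_largest t xs = rev (sort xs) ! (t - 1)"

definition col_off :: "real mat \<Rightarrow> nat \<Rightarrow> real list" where
  "col_off B j = [B $$ (i,j). i \<leftarrow> [0..<dim_row B], i \<noteq> j]"

definition is_spectrum_list :: "real mat \<Rightarrow> complex list \<Rightarrow> bool" where
  "is_spectrum_list A ls \<longleftrightarrow> char_poly (cmat A) = (\<Prod>a\<leftarrow>ls. [:- a, 1:])"

end

theory Submission
  imports Defs
begin



lemma row_bound:
  fixes M :: "complex mat" and x :: "complex vec"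
  assumes M: "M \<in> carrier_mat n n" and x: "x \<in> carrier_vec n"
    and ev: "M *\<^sub>v x = mu \<cdot>\<^sub>v x" and i: "i < n"
    and bd: "\<And>k. k < n \<Longrightarrow> k \<noteq> i \<Longrightarrow> cmod (x $ k) \<le> b"
  shows "cmod (mu - M $$ (i,i)) * cmod (x $ i) \<le> row_dev M i * b"
proof -
  have "(M *\<^sub>v x) $ i = (\<Sum>k\<in>{0..<n}. M $$ (i,k) * x $ k)"
    using M x i by (auto simp: mult_mat_vec_def scalar_prod_def)
  moreover have "(M *\<^sub>v x) $ i = mu * x $ i" using ev x i by simp
  ultimately have e: "mu * x $ i = M $$ (i,i) * x $ i + (\<Sum>k\<in>{0..<n}-{i}. M $$ (i,k) * x $ k)"
    using i by (simp add: sum.remove[of "{0..<n}" i])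
  hence "(mu - M $$ (i,i)) * x $ i = (\<Sum>k\<in>{0..<n}-{i}. M $$ (i,k) * x $ k)"
    by (simp add: algebra_simps)
  hence "cmod (mu - M $$ (i,i)) * cmod (x $ i) = cmod (\<Sum>k\<in>{0..<n}-{i}. M $$ (i,k) * x $ k)"
    by (metis norm_mult)
  also have "\<dots> \<le> (\<Sum>k\<in>{0..<n}-{i}. cmod (M $$ (i,k)) * cmod (x $ k))"
    by (rule order_trans[OF norm_sum], simp add: norm_mult)
  also have "\<dots> \<le> (\<Sum>k\<in>{0..<n}-{i}. cmod (M $$ (i,k)) * b)"
    by (rule sum_mono, rule mult_left_mono, auto intro: bd)
  also have "\<dots> = row_dev M i * b" using M
    by (simp add: row_dev_def sum_distrib_right)
  finally show ?thesis .
qed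

lemma brauer:
  fixes M :: "complex mat"
  assumes M: "M \<in> carrier_mat n n" and n2: "2 \<le> n" and ev: "eigenvalue M mu"
  shows "mu \<in> ob_set M"
proof -
  from ev obtain x where x: "x \<in> carrier_vec n" and x0: "x \<noteq> 0\<^sub>v n" and Mx: "M *\<^sub>v x = mu \<cdot>\<^sub>v x"
    using M unfolding eigenvalue_def eigenvector_def by auto
  define f where "f = (\<lambda>k. cmod (x $ k))"
  have exm: "\<exists>p\<in>K. \<forall>k\<in>K. f k \<le> f p" if "finite K" "K \<noteq> {}" for K
  proof -
    have "Max (f ` K) \<in> f ` K" using that by (intro Max_in) auto
    then obtain p where "p \<in> K" "f p = Max (f ` K)" by auto
    thus ?thesis using that by (metis Max_ge finite_imageI imageI)
  qed
  have "\<exists>p\<in>{0..<n}. \<forall>k\<in>{0..<n}. f k \<le> f p"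
    using n2 by (intro exm) auto
  then obtain p where p: "p < n" and pmax: "\<And>k. k < n \<Longrightarrow> f k \<le> f p" by auto
  have "\<exists>q\<in>{0..<n}-{p}. \<forall>k\<in>{0..<n}-{p}. f k \<le> f q"
    proof (intro exm)
    show "{0..<n} - {p} \<noteq> {}"
      proof -
      have "(0::nat) \<in> {0..<n} - {p} \<or> (1::nat) \<in> {0..<n} - {p}" using n2 by auto
      thus ?thesis by blast
    qed
  qed auto
  then obtain q where q0: "q \<in> {0..<n} - {p}" and qm: "\<forall>k\<in>{0..<n} - {p}. f k \<le> f q"
    by blast
  have q: "q < n" "q \<noteq> p" using q0 by auto
  have qmax: "\<And>k. k < n \<Longrightarrow> k \<noteq> p \<Longrightarrow> f k \<le> f q" using qm by auto
  have xp: "f p > 0"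
  proof (rule ccontr)
    assume "\<not> f p > 0"
    hence "\<And>k. k < n \<Longrightarrow> x $ k = 0" using pmax unfolding f_def
      by (metis norm_ge_zero norm_le_zero_iff order.trans not_less)
    hence "x = 0\<^sub>v n" using x by (intro eq_vecI) auto
    thus False using x0 by simp
  qed
  have r1: "cmod (mu - M $$ (p,p)) * f p \<le> row_dev M p * f q"
    unfolding f_def by (rule row_bound[OF M x Mx p]) (auto intro: qmax[unfolded f_def])
  have r2: "cmod (mu - M $$ (q,q)) * f q \<le> row_dev M q * f p"
    unfolding f_def by (rule row_bound[OF M x Mx q(1)]) (auto intro: pmax[unfolded f_def])
  have Rp: "row_dev M p \<ge> 0" "row_dev M q \<ge> 0" unfolding row_dev_def by (auto intro: sum_nonneg)
  have fq: "f q \<ge> 0" unfolding f_def by simp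
  have key: "cmod (mu - M $$ (p,p)) * cmod (mu - M $$ (q,q)) \<le> row_dev M p * row_dev M q"
  proof (cases "f q = 0")
    case True
    with r1 xp have "cmod (mu - M $$ (p,p)) = 0"
      by (metis mult_eq_0_iff mult_le_0_iff norm_ge_zero order_less_le order_antisym mult_zero_right)
    thus ?thesis using Rp by simp
  next
    case False
    hence fq': "f q > 0" using fq by simp
    have "(cmod (mu - M $$ (p,p)) * f p) * (cmod (mu - M $$ (q,q)) * f q) \<le> (row_dev M p * f q) * (row_dev M q * f p)"
      by (rule mult_mono[OF r1 r2]) (use Rp fq xp in auto)
    hence "(cmod (mu - M $$ (p,p)) * cmod (mu - M $$ (q,q))) * (f p * f q) \<le> (row_dev M p * row_dev M q) * (f p * f q)"
      by (simp add: algebra_simps)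
    thus ?thesis using xp fq' by (simp add: mult_le_cancel_right)
  qed
  show ?thesis
  proof (cases "p < q")
    case True
    show ?thesis unfolding ob_set_def using M True key q
      by (intro UN_I[where a=p] UN_I[where a=q]) auto
  next
    case False
    hence "q < p" using q by auto
    thus ?thesis unfolding ob_set_def using M key p
      by (intro UN_I[where a=q] UN_I[where a=p]) (auto simp: mult.commute)
  qed
qed


lemma sum_Suc_split: "(\<Sum>k\<in>{0..<Suc m}. f k) = f 0 + (\<Sum>k\<in>{0..<m}. f (Suc k))"
  by (simp add: sum.atLeast0_lessThan_Suc_shift o_def del: sum.op_ivl_Suc)

lemma if01_mult: "(if P then 1 else 0) * x = (if P then x else (0::'a::semiring_1))" by simp

lemma mult_if01: "x * (if P then 1 else 0) = (if P then x else (0::'a::semiring_1))" by simp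

lemma deflate:
  fixes M :: "complex mat"
  assumes M: "M \<in> carrier_mat (Suc m) (Suc m)"
    and rs: "\<And>i. i < Suc m \<Longrightarrow> (\<Sum>j\<in>{0..<Suc m}. M $$ (i,j)) = lam"
  shows "char_poly M = [:-lam,1:] * char_poly (mat m m (\<lambda>(i,j). M $$ (Suc i, Suc j) - M $$ (0, Suc j)))"
proof -
  define D where "D = mat m m (\<lambda>(i,j). M $$ (Suc i, Suc j) - M $$ (0, Suc j))"
  define A1 where "A1 = mat 1 1 (\<lambda>_. lam)"
  define A2 where "A2 = mat 1 m (\<lambda>(_,j). M $$ (0, Suc j))"
  define T where "T = four_block_mat A1 A2 (0\<^sub>m m 1) D"
  define P :: "complex mat" where "P = mat (Suc m) (Suc m) (\<lambda>(k,j). if j = 0 then 1 else if k = j then 1 else 0)"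
  define Q :: "complex mat" where "Q = mat (Suc m) (Suc m) (\<lambda>(k,j). if k = j then 1 else if j = 0 then -1 else 0)"
  have T: "T \<in> carrier_mat (Suc m) (Suc m)" unfolding T_def A1_def A2_def D_def by auto
  have P: "P \<in> carrier_mat (Suc m) (Suc m)" and Q: "Q \<in> carrier_mat (Suc m) (Suc m)"
    unfolding P_def Q_def by auto
  have PQ: "P * Q = 1\<^sub>m (Suc m)"
  proof (rule eq_matI)
    fix i j assume i: "i < dim_row (1\<^sub>m (Suc m))" and j: "j < dim_col (1\<^sub>m (Suc m))"
    show "(P * Q) $$ (i, j) = 1\<^sub>m (Suc m) $$ (i, j)"
      using i j unfolding P_def Q_def
      by (cases i; cases j) (auto simp: scalar_prod_def sum_Suc_split if01_mult mult_if01 sum_negf sum.delta sum.delta' simp del: sum.op_ivl_Suc cong: if_cong)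
  qed (auto simp: P_def Q_def)
  have QP: "Q * P = 1\<^sub>m (Suc m)"
  proof (rule eq_matI)
    fix i j assume i: "i < dim_row (1\<^sub>m (Suc m))" and j: "j < dim_col (1\<^sub>m (Suc m))"
    show "(Q * P) $$ (i, j) = 1\<^sub>m (Suc m) $$ (i, j)"
      using i j unfolding P_def Q_def
      by (cases i; cases j) (auto simp: scalar_prod_def sum_Suc_split if01_mult mult_if01 sum_negf sum.delta sum.delta' simp del: sum.op_ivl_Suc cong: if_cong)
  qed (auto simp: P_def Q_def)
  have MP: "M * P = P * T"
  proof (rule eq_matI)
    fix i j assume i: "i < dim_row (P * T)" and j: "j < dim_col (P * T)"
    have i': "i < Suc m" and j': "j < Suc m" using i j P T by auto
    show "(M * P) $$ (i, j) = (P * T) $$ (i, j)"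
    proof (cases j)
      case 0
      have "(M * P) $$ (i, j) = (\<Sum>k\<in>{0..<Suc m}. M $$ (i,k))"
        using i' j' M 0 unfolding P_def by (auto simp: scalar_prod_def)
      also have "\<dots> = lam" using rs i' by simp
      finally show ?thesis using i' j' 0 M
        unfolding P_def T_def A1_def A2_def D_def
        by (cases i) (auto simp: scalar_prod_def sum_Suc_split if01_mult mult_if01 sum_negf sum.delta sum.delta' simp del: sum.op_ivl_Suc cong: if_cong)
    next
      case (Suc j0)
      then show ?thesis using i' j' M
        unfolding P_def T_def A1_def A2_def D_def
        by (cases i) (auto simp: scalar_prod_def sum_Suc_split if01_mult mult_if01 sum_negf sum.delta sum.delta' simp del: sum.op_ivl_Suc cong: if_cong)
    qed
  qed (use M P T in auto)
  have "M = P * T * Q"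
  proof -
    have "P * T * Q = M * P * Q" using MP by simp
    also have "\<dots> = M * (P * Q)" using M P Q by (simp add: assoc_mult_mat)
    also have "\<dots> = M" using M PQ by simp
    finally show ?thesis by simp
  qed
  hence "similar_mat M T" by (intro similar_matI[OF _ PQ QP]) (use M P Q T in auto)
  hence "char_poly M = char_poly T" by (rule char_poly_similar)
  also have "\<dots> = char_poly A1 * char_poly D" unfolding T_def
    by (rule char_poly_four_block_zeros_col) (auto simp: A1_def A2_def D_def)
  also have "char_poly A1 = [:-lam,1:]"
  proof -
    have "upper_triangular A1" unfolding A1_def upper_triangular_def by auto
    from char_poly_upper_triangular[OF _ this, of 1] show ?thesis
      by (auto simp: A1_def diag_mat_def)
  qed
  finally show ?thesis unfolding D_def .
qed


lemma main_gen:
  fixes A :: "real mat" and n :: nat and v :: "real vec" and lam1 :: real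
    and lams :: "complex list" and c :: "nat \<Rightarrow> real"
  assumes A: "A \<in> carrier_mat n n"
    and n2: "2 \<le> n"
    and spec: "is_spectrum_list A lams" and len: "length lams = n"
    and l1: "lams ! 0 = complex_of_real lam1"
    and v: "dim_vec v = n" and eig: "A *\<^sub>v v = lam1 \<cdot>\<^sub>v v"
    and nz: "\<forall>i<n. v $ i \<noteq> 0"
    and B: "B = mat_diag n (\<lambda>i. 1 / v $ i) * A * mat_diag n (\<lambda>i. v $ i)"
    and F: "F = mat n n (\<lambda>(i,j). B $$ (i,j) - c j)"
  shows "\<forall>i\<in>{1..<n}. lams ! i \<in> ob_set (cmat F) \<inter> ob_set (cmat (transpose_mat F))"
proof -
  define S where "S = mat_diag n (\<lambda>i. v $ i)"
  define Sinv where "Sinv = mat_diag n (\<lambda>i. 1 / v $ i)"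
  have S: "S \<in> carrier_mat n n" and Sinv: "Sinv \<in> carrier_mat n n" unfolding S_def Sinv_def by auto
  have Bc: "B \<in> carrier_mat n n" using A unfolding B by (meson mult_carrier_mat mat_diag_dim)
  have Bent: "B $$ (i,j) = (1 / v $ i) * A $$ (i,j) * v $ j" if "i < n" "j < n" for i j
  proof -
    have "B = mat n n (\<lambda>(i,j). (1 / v $ i) * A $$ (i,j)) * mat_diag n (\<lambda>i. v $ i)"
      unfolding B by (subst mat_diag_mult_left[OF A]) simp
    also have "\<dots> = mat n n (\<lambda>(i,j). (1 / v $ i) * A $$ (i,j) * v $ j)"
      by (subst mat_diag_mult_right[of _ n n]) (auto intro!: eq_matI)
    finally show ?thesis using that by simp
  qed
  have rs: "(\<Sum>j\<in>{0..<n}. B $$ (i,j)) = lam1" if i: "i < n" for i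
  proof -
    have "(A *\<^sub>v v) $ i = (\<Sum>j\<in>{0..<n}. A $$ (i,j) * v $ j)"
      using A v i by (auto simp: mult_mat_vec_def scalar_prod_def)
    moreover have "(A *\<^sub>v v) $ i = lam1 * v $ i" using eig v i by simp
    ultimately have e: "(\<Sum>j\<in>{0..<n}. A $$ (i,j) * v $ j) = lam1 * v $ i" by simp
    have "(\<Sum>j\<in>{0..<n}. B $$ (i,j)) = (1 / v $ i) * (\<Sum>j\<in>{0..<n}. A $$ (i,j) * v $ j)"
      by (simp add: Bent i sum_distrib_left mult.assoc)
    also have "\<dots> = lam1" using e nz i by simp
    finally show ?thesis .
  qed
  have SSi: "S * Sinv = 1\<^sub>m n" "Sinv * S = 1\<^sub>m n"
    unfolding S_def Sinv_def mat_diag_diag using nz by (auto intro!: eq_matI simp: mat_diag_def)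
  have "S * B * Sinv = (S * Sinv) * A * (S * Sinv)"
    unfolding B S_def[symmetric] Sinv_def[symmetric] using A S Sinv
    by (simp add: assoc_mult_mat[of _ n n _ n _ n])
  also have "\<dots> = A" using SSi A by simp
  finally have "similar_mat A B" using A Bc S Sinv SSi
    by (intro similar_matI[of _ _ S Sinv n]) auto
  hence cpAB: "char_poly (cmat A) = char_poly (cmat B)"
    using of_real_hom.char_poly_hom[OF A] of_real_hom.char_poly_hom[OF Bc] char_poly_similar
    by metis
  obtain m where nm: "n = Suc m" using n2 by (cases n) auto
  define D where "D = mat m m (\<lambda>(i,j). cmat B $$ (Suc i, Suc j) - cmat B $$ (0, Suc j))"
  have cB: "cmat B \<in> carrier_mat (Suc m) (Suc m)" using Bc nm by simp
  have cF: "cmat F \<in> carrier_mat (Suc m) (Suc m)" using nm F by simp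
  have dB: "char_poly (cmat B) = [:- complex_of_real lam1, 1:] * char_poly D"
    unfolding D_def
  proof (rule deflate[OF cB])
    fix i assume i: "i < Suc m"
    have "(\<Sum>j\<in>{0..<Suc m}. cmat B $$ (i, j)) = complex_of_real (\<Sum>j\<in>{0..<n}. B $$ (i,j))"
      using Bc i nm by simp
    also have "\<dots> = complex_of_real lam1" using rs[of i] i nm by (simp del: sum.op_ivl_Suc)
    finally show "(\<Sum>j\<in>{0..<Suc m}. cmat B $$ (i, j)) = complex_of_real lam1" .
  qed
  have DF: "mat m m (\<lambda>(i,j). cmat F $$ (Suc i, Suc j) - cmat F $$ (0, Suc j)) = D"
    unfolding D_def using F Bc nm by (auto intro!: eq_matI)
  have dF: "char_poly (cmat F) = [:- complex_of_real (lam1 - (\<Sum>j\<in>{0..<n}. c j)), 1:] * char_poly D"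
    unfolding DF[symmetric]
  proof (rule deflate[OF cF])
    fix i assume i: "i < Suc m"
    have "(\<Sum>j\<in>{0..<Suc m}. cmat F $$ (i, j)) = complex_of_real (\<Sum>j\<in>{0..<n}. B $$ (i,j) - c j)"
      using F i nm by simp
    also have "\<dots> = complex_of_real (lam1 - (\<Sum>j\<in>{0..<n}. c j))"
      using rs[of i] i nm by (simp add: sum_subtractf del: sum.op_ivl_Suc)
    finally show "(\<Sum>j\<in>{0..<Suc m}. cmat F $$ (i, j)) = complex_of_real (lam1 - (\<Sum>j\<in>{0..<n}. c j))" .
  qed
  have lamsx: "lams = lams ! 0 # tl lams" using len nm by (cases lams) auto
  have "char_poly (cmat A) = [:- complex_of_real lam1, 1:] * (\<Prod>a\<leftarrow>tl lams. [:- a, 1:])"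
    using spec unfolding is_spectrum_list_def by (subst (asm) lamsx) (simp add: l1)
  note cA = this
  hence cpD: "char_poly D = (\<Prod>a\<leftarrow>tl lams. [:- a, 1:])"
  proof -
    have "[:- complex_of_real lam1, 1:] * char_poly D = [:- complex_of_real lam1, 1:] * (\<Prod>a\<leftarrow>tl lams. [:- a, 1:])"
      using cpAB dB cA by simp
    moreover have "[:- complex_of_real lam1, 1:] \<noteq> 0" by simp
    ultimately show ?thesis using mult_left_cancel by blast
  qed
  show ?thesis
  proof
    fix i assume i: "i \<in> {1..<n}"
    have "lams ! i = tl lams ! (i - 1)" using i nth_tl[of "i - 1" lams] len by auto
    moreover have "i - 1 < length (tl lams)" using i len by auto
    ultimately have "lams ! i \<in> set (tl lams)" by (metis nth_mem)
    hence "poly (\<Prod>a\<leftarrow>tl lams. [:- a, 1:]) (lams ! i) = 0"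
      by (simp add: poly_prod_list prod_list_zero_iff)
    hence "poly (char_poly (cmat F)) (lams ! i) = 0" using dF cpD by simp
    hence ev: "eigenvalue (cmat F) (lams ! i)" using eigenvalue_root_char_poly[OF cF] by simp
    have cF': "cmat F \<in> carrier_mat n n" using cF nm by simp
    have "eigenvalue (transpose_mat (cmat F)) (lams ! i)"
      using eigenvalue_root_char_poly[of "transpose_mat (cmat F)" n] cF' ev
        eigenvalue_root_char_poly[OF cF'] by simp
    hence "lams ! i \<in> ob_set (transpose_mat (cmat F))"
      using brauer[of _ n] cF' n2 by auto
    moreover have "lams ! i \<in> ob_set (cmat F)" using brauer[OF cF' n2 ev] .
    ultimately show "lams ! i \<in> ob_set (cmat F) \<inter> ob_set (cmat (transpose_mat F))"
      by (simp add: map_mat_transpose)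
  qed
qed
theorem theorem7:
  fixes A :: "real mat" and n :: nat and v :: "real vec" and lam1 :: real
    and lams :: "complex list"
  assumes A: "A \<in> carrier_mat n n"
    and npos: "0 < n"
    and spec: "is_spectrum_list A lams" and len: "length lams = n"
    and l1: "lams ! 0 = complex_of_real lam1"
    and v: "dim_vec v = n" and eig: "A *\<^sub>v v = lam1 \<cdot>\<^sub>v v"
    and nz: "\<forall>i<n. v $ i \<noteq> 0"
  defines "S \<equiv> mat_diag n (\<lambda>i. v $ i)"
    and "Sinv \<equiv> mat_diag n (\<lambda>i. 1 / v $ i)"
  defines "B \<equiv> Sinv * A * S"
  shows
    "(even n \<longrightarrow>
       (let F = mat n n (\<lambda>(i,j). B $$ (i,j) - kth_largest (n div 2) (col_off B j))
        in \<forall>i\<in>{1..<n}. lams ! i \<in> ob_set (cmat F) \<inter> ob_set (cmat (transpose_mat F))))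
     \<and> (odd n \<and> 3 \<le> n \<longrightarrow>
       (let F = mat n n (\<lambda>(i,j). B $$ (i,j) + (- kth_largest ((n - 1) div 2) (col_off B j)));
            G = mat n n (\<lambda>(i,j). B $$ (i,j) + (- kth_largest ((n + 1) div 2) (col_off B j)))
        in \<forall>i\<in>{1..<n}. lams ! i \<in> ob_set (cmat F) \<inter> ob_set (cmat (transpose_mat F))
              \<inter> ob_set (cmat G) \<inter> ob_set (cmat (transpose_mat G))))"
  proof -
  have Bd: "B = mat_diag n (\<lambda>i. 1 / v $ i) * A * mat_diag n (\<lambda>i. v $ i)"
    unfolding B_def S_def Sinv_def ..
  note G = main_gen[OF A _ spec len l1 v eig nz Bd]
  show ?thesis
  proof (intro conjI impI)
    assume "even n"
    hence "n \<noteq> 1" by auto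
    hence n2: "2 \<le> n" using npos by linarith
    show "let F = mat n n (\<lambda>(i,j). B $$ (i,j) - kth_largest (n div 2) (col_off B j))
        in \<forall>i\<in>{1..<n}. lams ! i \<in> ob_set (cmat F) \<inter> ob_set (cmat (transpose_mat F))"
      unfolding Let_def by (rule G[OF n2 refl])
  next
    assume o: "odd n \<and> 3 \<le> n"
    hence n2: "2 \<le> n" by auto
    have e1: "mat n n (\<lambda>(i,j). B $$ (i,j) + (- kth_largest ((n - 1) div 2) (col_off B j)))
      = mat n n (\<lambda>(i,j). B $$ (i,j) - kth_largest ((n - 1) div 2) (col_off B j))" by simp
    have e2: "mat n n (\<lambda>(i,j). B $$ (i,j) + (- kth_largest ((n + 1) div 2) (col_off B j)))
      = mat n n (\<lambda>(i,j). B $$ (i,j) - kth_largest ((n + 1) div 2) (col_off B j))" by simp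
    show "let F = mat n n (\<lambda>(i,j). B $$ (i,j) + (- kth_largest ((n - 1) div 2) (col_off B j)));
            G = mat n n (\<lambda>(i,j). B $$ (i,j) + (- kth_largest ((n + 1) div 2) (col_off B j)))
        in \<forall>i\<in>{1..<n}. lams ! i \<in> ob_set (cmat F) \<inter> ob_set (cmat (transpose_mat F))
              \<inter> ob_set (cmat G) \<inter> ob_set (cmat (transpose_mat G))"
      unfolding Let_def e1 e2 using G[OF n2 refl, of "\<lambda>j. kth_largest ((n - 1) div 2) (col_off B j)"]
        G[OF n2 refl, of "\<lambda>j. kth_largest ((n + 1) div 2) (col_off B j)"] by blast
  qed
qed

end
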